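(* Let $A$ and $B$ be discrete random variables with finite supports such that $\{A,B\}$ is quasi-uniform. Then there exists a random variable $W$, jointly distributed with $(A,B)$, such that $H(W)=H(A\mid B)$ and $H(A\mid B,W)=0$.
   Context: A family of random variables $\{X_i:i\in\mathcal N\}$ is quasi-uniform if for every subset $\alpha\subseteq\mathcal N$, the random variable $(X_i:i\in\alpha)$ is uniformly distributed over its support; for $\{A,B\}$ this means $A$, $B$ and $(A,B)$ are each uniform on their supports. *)

theory Defs
  imports "HOL-Probability.Probability"
begin

definition entropy_pmf :: "'a pmf \<Rightarrow> real" where
  "entropy_pmf p = - (\<Sum>x\<in>set_pmf p. pmf p x * log 2 (pmf p x))"

definition cond_entropy_pmf :: "('a \<times> 'b) pmf \<Rightarrow> real" where
  "cond_entropy_pmf J =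
     - (\<Sum>z\<in>set_pmf J. pmf J z * log 2 (pmf J z / pmf (map_pmf snd J) (snd z)))"

definition uniform_on_support :: "'a pmf \<Rightarrow> bool" where
  "uniform_on_support p \<longleftrightarrow> (\<forall>x\<in>set_pmf p. \<forall>y\<in>set_pmf p. pmf p x = pmf p y)"

text \<open>The pair {A, B}, given by its joint distribution P, is quasi-uniform:
  A, B and (A, B) are each uniform on their supports (the empty subset is trivial).\<close>
definition quasi_uniform2 :: "('a \<times> 'b) pmf \<Rightarrow> bool" where
  "quasi_uniform2 P \<longleftrightarrow> uniform_on_support (map_pmf fst P) \<and>
     uniform_on_support (map_pmf snd P) \<and> uniform_on_support P"

end

theory Submission
  imports Defs
begin

lemma unif_const:
  assumes "finite (set_pmf p)" "uniform_on_support p" "x \<in> set_pmf p"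
  shows "pmf p x = 1 / card (set_pmf p)"
proof -
  have "(\<Sum>y\<in>set_pmf p. pmf p y) = 1" using sum_pmf_eq_1[OF assms(1)] by simp
  moreover have "(\<Sum>y\<in>set_pmf p. pmf p y) = (\<Sum>y\<in>set_pmf p. pmf p x)"
    using assms(2,3) unfolding uniform_on_support_def by (intro sum.cong refl) blast
  ultimately have "card (set_pmf p) * pmf p x = 1" by simp
  moreover have "real (card (set_pmf p)) \<noteq> 0" using assms(1,3) by auto
  ultimately show ?thesis by (simp add: field_simps)
qed

lemma pmf_map_fin:
  assumes "finite (set_pmf p)"
  shows "pmf (map_pmf f p) y = sum (pmf p) {z\<in>set_pmf p. f z = y}"
proof -
  have "pmf (map_pmf f p) y = measure p (f -` {y} \<inter> set_pmf p)"
    by (simp add: pmf_map measure_Int_set_pmf)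
  also have "f -` {y} \<inter> set_pmf p = {z\<in>set_pmf p. f z = y}" by auto
  also have "measure p \<dots> = sum (pmf p) {z\<in>set_pmf p. f z = y}"
    using assms by (intro measure_measure_pmf_finite) auto
  finally show ?thesis .
qed

lemma cond_zero:
  assumes "finite (set_pmf J)" "inj_on snd (set_pmf J)"
  shows "cond_entropy_pmf J = 0"
proof -
  have "pmf J z * log 2 (pmf J z / pmf (map_pmf snd J) (snd z)) = 0" if z: "z \<in> set_pmf J" for z
  proof -
    have "{z'\<in>set_pmf J. snd z' = snd z} = {z}" using z inj_onD[OF assms(2)] by blast
    then have "pmf (map_pmf snd J) (snd z) = pmf J z" using pmf_map_fin[OF assms(1), of snd "snd z"] by simp
    moreover have "pmf J z > 0" using z by (simp add: set_pmf_iff pmf_positive)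
    ultimately show ?thesis by simp
  qed
  then have "(\<Sum>z\<in>set_pmf J. pmf J z * log 2 (pmf J z / pmf (map_pmf snd J) (snd z))) = 0"
    by (intro sum.neutral ballI)
  then show ?thesis unfolding cond_entropy_pmf_def by simp
qed

theorem lemma2:
  fixes P :: "('a \<times> 'b) pmf"
  assumes "finite (set_pmf (map_pmf fst P))"
    and "finite (set_pmf (map_pmf snd P))"
    and "quasi_uniform2 P"
  shows "\<exists>Q :: ('a \<times> 'b \<times> nat) pmf.
           map_pmf (\<lambda>(a, b, w). (a, b)) Q = P \<and>
           finite (set_pmf (map_pmf (\<lambda>(a, b, w). w) Q)) \<and>
           entropy_pmf (map_pmf (\<lambda>(a, b, w). w) Q) = cond_entropy_pmf P \<and>
           cond_entropy_pmf (map_pmf (\<lambda>(a, b, w). (a, (b, w))) Q) = 0"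
proof -
  define S where "S = set_pmf P"
  define SB where "SB = snd ` S"
  have SB: "set_pmf (map_pmf snd P) = SB" by (simp add: SB_def S_def)
  have finS: "finite S"
  proof (rule finite_subset)
    show "S \<subseteq> fst ` S \<times> snd ` S" by (rule subset_fst_snd)
    show "finite (fst ` S \<times> snd ` S)" using assms(1,2) by (simp add: S_def)
  qed
  have finSB: "finite SB" using finS by (simp add: SB_def)
  define N where "N = card S"
  define M where "M = card SB"
  have Sne: "S \<noteq> {}" by (simp add: S_def set_pmf_not_empty)
  have Npos: "N > 0" using finS Sne by (simp add: N_def card_gt_0_iff)
  have Mpos: "M > 0" using finSB Sne by (simp add: M_def SB_def card_gt_0_iff)
  have pP: "pmf P z = 1 / N" if "z \<in> S" for z
    using unif_const[of P z] assms(3) finS that by (simp add: quasi_uniform2_def S_def N_def)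
  have pB: "pmf (map_pmf snd P) b = 1 / M" if "b \<in> SB" for b
    using unif_const[of "map_pmf snd P" b] assms(3) finSB that SB
    by (simp add: quasi_uniform2_def M_def)
  define G where "G b = {z\<in>S. snd z = b}" for b
  have finG: "finite (G b)" for b using finS by (simp add: G_def)
  have cardG: "real (card (G b)) = real N / real M" if "b \<in> SB" for b
  proof -
    have "pmf (map_pmf snd P) b = sum (pmf P) (G b)"
      using pmf_map_fin[of P snd b] finS by (simp add: G_def S_def)
    also have "\<dots> = sum (\<lambda>_. 1 / N) (G b)" by (intro sum.cong) (auto simp: G_def pP)
    also have "\<dots> = card (G b) / N" by simp
    finally have "card (G b) / N = 1 / M" using pB[OF that] by simp
    then show ?thesis using Npos Mpos by (simp add: field_simps)
  qed
  obtain b0 where b0: "b0 \<in> SB" using Sne by (auto simp: SB_def)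
  define k where "k = card (G b0)"
  have cardGk: "card (G b) = k" if "b \<in> SB" for b
    using cardG[OF that] cardG[OF b0] unfolding k_def by linarith
  have kreal: "real k = real N / real M" using cardG[OF b0] by (simp add: k_def)
  have kpos: "k > 0"
  proof (rule ccontr)
    assume "\<not> k > 0"
    then have "real N / real M = 0" using kreal by simp
    then show False using Npos Mpos by simp
  qed
  define h where "h b = (SOME h. bij_betw h (G b) {0..<card (G b)})" for b
  have hb: "bij_betw (h b) (G b) {0..<card (G b)}" for b
    unfolding h_def using ex_bij_betw_finite_nat[OF finG] by (rule someI_ex)
  have hbk: "bij_betw (h b) (G b) {0..<k}" if "b \<in> SB" for b
    using hb[of b] cardGk[OF that] by simp
  define g where "g z = h (snd z) z" for z
  define Q where "Q = map_pmf (\<lambda>z. (fst z, snd z, g z)) P"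
  have Q1: "map_pmf (\<lambda>(a, b, w). (a, b)) Q = P"
    by (simp add: Q_def pmf.map_comp o_def)
  have W: "map_pmf (\<lambda>(a, b, w). w) Q = map_pmf g P"
    by (simp add: Q_def pmf.map_comp o_def)
  have inG: "z \<in> G (snd z)" if "z \<in> S" for z using that by (simp add: G_def)
  have snd_SB: "snd z \<in> SB" if "z \<in> S" for z using that by (simp add: SB_def)
  have Wset: "set_pmf (map_pmf g P) = {0..<k}"
  proof -
    have "g ` S = {0..<k}"
    proof
      show "g ` S \<subseteq> {0..<k}"
      proof
        fix x assume "x \<in> g ` S"
        then obtain z where z: "z \<in> S" "x = g z" by blast
        have "h (snd z) ` G (snd z) = {0..<k}"
          using bij_betw_imp_surj_on[OF hbk[OF snd_SB[OF z(1)]]] .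
        then show "x \<in> {0..<k}" using inG[OF z(1)] z(2) unfolding g_def by blast
      qed
      show "{0..<k} \<subseteq> g ` S"
      proof
        fix i assume "i \<in> {0..<k}"
        then have "i \<in> h b0 ` G b0" using hbk[OF b0] by (simp add: bij_betw_def)
        then obtain z where z: "z \<in> G b0" "h b0 z = i" by blast
        then have "z \<in> S" "g z = i" by (auto simp: g_def G_def)
        then show "i \<in> g ` S" by (intro image_eqI[of _ _ z]) auto
      qed
    qed
    then show ?thesis by (simp add: S_def)
  qed
  have pW: "pmf (map_pmf g P) i = 1 / k" if "i < k" for i
  proof -
    let ?C = "{z\<in>S. g z = i}"
    have "bij_betw snd ?C SB"
    proof (rule bij_betw_imageI)
      show "inj_on snd ?C"
      proof
        fix z z' assume z: "z \<in> ?C" and z': "z' \<in> ?C" and e: "snd z = snd z'"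
        then have "z \<in> G (snd z)" "z' \<in> G (snd z)" by (auto simp: G_def)
        moreover have "h (snd z) z = h (snd z) z'" using z z' e by (simp add: g_def)
        ultimately show "z = z'" using inj_onD[OF bij_betw_imp_inj_on[OF hb[of "snd z"]]] by blast
      qed
      show "snd ` ?C = SB"
      proof
        show "snd ` ?C \<subseteq> SB" by (auto simp: SB_def)
        show "SB \<subseteq> snd ` ?C"
        proof
          fix b assume b: "b \<in> SB"
          have "i \<in> h b ` G b" using hbk[OF b] that by (simp add: bij_betw_def)
          then obtain z where z: "z \<in> G b" "h b z = i" by blast
          then have "z \<in> ?C" "snd z = b" by (auto simp: g_def G_def)
          then show "b \<in> snd ` ?C" by (intro image_eqI[of _ _ z]) auto
        qed
      qed
    qed
    then have cC: "card ?C = M" by (simp add: M_def bij_betw_same_card)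
    have "pmf (map_pmf g P) i = sum (pmf P) ?C"
      using pmf_map_fin[of P g i] finS by (simp add: S_def)
    also have "\<dots> = sum (\<lambda>_. 1 / N) ?C" by (intro sum.cong) (auto simp: pP)
    also have "\<dots> = M / N" using cC by simp
    finally have "pmf (map_pmf g P) i = M / N" .
    moreover have "1 / real k = M / N" using kreal Npos Mpos by simp
    ultimately show ?thesis by simp
  qed
  have HW: "entropy_pmf (map_pmf g P) = log 2 k"
  proof -
    have "entropy_pmf (map_pmf g P) = - (\<Sum>i\<in>{0..<k}. (1 / k) * log 2 (1 / k))"
      unfolding entropy_pmf_def Wset by (intro arg_cong[where f=uminus] sum.cong) (auto simp: pW)
    also have "\<dots> = - log 2 (1 / k)" using kpos by simp
    also have "\<dots> = log 2 k" using kpos by (simp add: log_divide)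
    finally show ?thesis .
  qed
  have HP: "cond_entropy_pmf P = log 2 k"
  proof -
    have "cond_entropy_pmf P = - (\<Sum>z\<in>S. (1 / N) * log 2 ((1 / N) / (1 / M)))"
      unfolding cond_entropy_pmf_def S_def[symmetric]
      by (intro arg_cong[where f=uminus] sum.cong) (auto simp: pP pB snd_SB)
    also have "\<dots> = - log 2 ((1 / N) / (1 / M))" using Npos by (simp add: N_def)
    also have "(1 / N) / (1 / M) = 1 / (real N / real M)" by simp
    also have "- log 2 (1 / (real N / real M)) = log 2 (real N / real M)"
      using Npos Mpos by (simp add: log_divide)
    finally show ?thesis using kreal by simp
  qed
  have Q4: "cond_entropy_pmf (map_pmf (\<lambda>(a, b, w). (a, (b, w))) Q) = 0"
  proof (rule cond_zero)
    have e: "map_pmf (\<lambda>(a, b, w). (a, (b, w))) Q = map_pmf (\<lambda>z. (fst z, snd z, g z)) P"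
      by (simp add: Q_def pmf.map_comp o_def)
    show "finite (set_pmf (map_pmf (\<lambda>(a, b, w). (a, (b, w))) Q))"
      unfolding e using finS by (simp add: S_def)
    show "inj_on snd (set_pmf (map_pmf (\<lambda>(a, b, w). (a, (b, w))) Q))"
      unfolding e
    proof (rule inj_onI)
      fix x y
      assume xy: "x \<in> set_pmf (map_pmf (\<lambda>z. (fst z, snd z, g z)) P)"
        "y \<in> set_pmf (map_pmf (\<lambda>z. (fst z, snd z, g z)) P)" "snd x = snd y"
      have "x \<in> (\<lambda>z. (fst z, snd z, g z)) ` S" "y \<in> (\<lambda>z. (fst z, snd z, g z)) ` S"
        using xy(1,2) unfolding S_def set_map_pmf .
      then obtain z z' where z: "z \<in> S" "z' \<in> S" "x = (fst z, snd z, g z)" "y = (fst z', snd z', g z')"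
        by blast
      then have zz: "z \<in> S" "z' \<in> S" "x = (fst z, snd z, g z)" "y = (fst z', snd z', g z')"
        "snd z = snd z'" "g z = g z'" using xy(3) by simp_all
      then have "z \<in> G (snd z)" "z' \<in> G (snd z)" by (auto simp: G_def)
      moreover have "h (snd z) z = h (snd z) z'" using zz by (simp add: g_def)
      ultimately have "z = z'" using inj_onD[OF bij_betw_imp_inj_on[OF hb[of "snd z"]]] by blast
      then show "x = y" using zz by simp
    qed
  qed
  have fW: "finite (set_pmf (map_pmf (\<lambda>(a, b, w). w) Q))" unfolding W Wset by simp
  have eW: "entropy_pmf (map_pmf (\<lambda>(a, b, w). w) Q) = cond_entropy_pmf P"
    unfolding W HW HP ..
  show ?thesis
    by (rule exI[of _ Q], intro conjI, rule Q1, rule fW, rule eW, rule Q4)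
qed

end
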